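(* Let $\Omega\subseteq\mathbb{R}^2$ be open and connected. Let $R\in C^2(\Omega;SO(2))$ and $\alpha\in\mathbb{R}^2$ be such that $\operatorname{curl} R=\alpha$ in $\Omega$. Then $R$ is constant.
   Context: $SO(2)$ is the group of $2\times2$ rotation matrices. For a vector field $f=(f_1,f_2)$ on a subset of $\mathbb{R}^2$, $\operatorname{curl} f=\partial_1 f_2-\partial_2 f_1$; for a matrix field $R$, $\operatorname{curl}R\in\mathbb{R}^2$ is obtained by applying $\operatorname{curl}$ to each row, i.e. $(\operatorname{curl}R)_i=\partial_1R_{i2}-\partial_2R_{i1}$. *)

theory Defs
  imports "HOL-Analysis.Analysis"
begin

definition partial_deriv :: "2 \<Rightarrow> (real^2 \<Rightarrow> 'b::real_normed_vector) \<Rightarrow> real^2 \<Rightarrow> 'b" where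
  "partial_deriv j f x = vector_derivative (\<lambda>t. f (x + t *\<^sub>R axis j 1)) (at 0)"

definition curl_mat :: "(real^2 \<Rightarrow> real^2^2) \<Rightarrow> real^2 \<Rightarrow> real^2" where
  "curl_mat R x = (\<chi> i. partial_deriv 1 (\<lambda>y. R y $ i $ 2) x - partial_deriv 2 (\<lambda>y. R y $ i $ 1) x)"

definition C2_on :: "(real^2) set \<Rightarrow> (real^2 \<Rightarrow> 'b::real_normed_vector) \<Rightarrow> bool" where
  "C2_on S f \<longleftrightarrow> (\<exists>(f' :: real^2 \<Rightarrow> ((real^2) \<Rightarrow>\<^sub>L 'b)) (f'' :: real^2 \<Rightarrow> ((real^2) \<Rightarrow>\<^sub>L ((real^2) \<Rightarrow>\<^sub>L 'b))).
      (\<forall>x\<in>S. (f has_derivative blinfun_apply (f' x)) (at x)) \<and>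
      (\<forall>x\<in>S. (f' has_derivative blinfun_apply (f'' x)) (at x)) \<and>
      continuous_on S f'')"

end

theory Submission
  imports Defs
begin
lemma schwarz_half:
  fixes f :: "'a::real_normed_vector \<Rightarrow> real"
  assumes S: "open S" "x \<in> S"
  and Df: "\<And>y. y \<in> S \<Longrightarrow> (f has_derivative D y) (at y)"
  and Eu: "((\<lambda>y. D y u) has_derivative Eu) (at x)"
  and e: "e > 0"
  shows "\<exists>d>0. \<forall>h. 0 < h \<and> h < d \<longrightarrow>
     \<bar>(f (x + h *\<^sub>R u + h *\<^sub>R v) - f (x + h *\<^sub>R u) - f (x + h *\<^sub>R v) + f x) - h\<^sup>2 * Eu v\<bar>
        \<le> e * h\<^sup>2 * (2 * norm u + norm v)"
proof -
  obtain r where r: "r > 0" "ball x r \<subseteq> S" using S open_contains_ball by blast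
  have blE: "bounded_linear Eu" using Eu has_derivative_bounded_linear by blast
  obtain d0 where d0: "d0 > 0" and d0P: "\<And>y. norm (y - x) < d0 \<Longrightarrow>
      norm (D y u - D x u - Eu (y - x)) \<le> e * norm (y - x)"
    using Eu e unfolding has_derivative_at_alt by blast
  define d where "d = min d0 r / (norm u + norm v + 1)"
  have np: "0 < norm u + norm v + 1" using norm_ge_zero[of u] norm_ge_zero[of v] by linarith
  have dpos: "d > 0" using d0 r np by (simp add: d_def)
  have key: "h * (norm u + norm v) < min d0 r" if "0 < h" "h < d" for h
  proof -
    have "h * (norm u + norm v) \<le> h * (norm u + norm v + 1)" using that by simp
    also have "\<dots> < d * (norm u + norm v + 1)"
      using that np by (intro mult_strict_right_mono) auto
    also have "\<dots> = min d0 r" unfolding d_def using np by simp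
    finally show ?thesis .
  qed
  show ?thesis
  proof (intro exI[of _ d] conjI allI impI dpos)
    fix h :: real assume h: "0 < h \<and> h < d"
    hence h0: "0 < h" and hd: "h < d" by auto
    have hk: "h * (norm u + norm v) < min d0 r" using key h0 hd by blast
    have inS: "x + t *\<^sub>R u + s *\<^sub>R v \<in> S" if "0 \<le> t" "t \<le> h" "0 \<le> s" "s \<le> h" for t s
    proof -
      have "norm (t *\<^sub>R u + s *\<^sub>R v) \<le> t * norm u + s * norm v"
        using that by (metis abs_of_nonneg norm_scaleR norm_triangle_ineq)
      also have "\<dots> \<le> h * norm u + h * norm v"
        using that by (intro add_mono mult_right_mono) auto
      also have "\<dots> < r" using hk by (simp add: distrib_left)
      moreover have "dist x (x + t *\<^sub>R u + s *\<^sub>R v) = norm (t *\<^sub>R u + s *\<^sub>R v)"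
        by (metis add.assoc add_diff_cancel_left' dist_commute dist_norm)
      ultimately have "x + t *\<^sub>R u + s *\<^sub>R v \<in> ball x r" by simp
      thus ?thesis using r by blast
    qed
    define g where "g t = f (x + t *\<^sub>R u + h *\<^sub>R v) - f (x + t *\<^sub>R u)" for t
    have gder: "(g has_derivative (\<lambda>s. D (x + t *\<^sub>R u + h *\<^sub>R v) (s *\<^sub>R u) - D (x + t *\<^sub>R u) (s *\<^sub>R u)))
        (at t within {0..h})" if "0 \<le> t" "t \<le> h" for t
    proof -
      have l1: "((\<lambda>t. x + t *\<^sub>R u + h *\<^sub>R v) has_derivative (\<lambda>s. s *\<^sub>R u)) (at t within {0..h})"
        by (auto intro!: derivative_eq_intros)
      have l2: "((\<lambda>t. x + t *\<^sub>R u) has_derivative (\<lambda>s. s *\<^sub>R u)) (at t within {0..h})"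
        by (auto intro!: derivative_eq_intros)
      have a1: "(f has_derivative D (x + t *\<^sub>R u + h *\<^sub>R v)) (at (x + t *\<^sub>R u + h *\<^sub>R v))"
        using Df inS that h0 by auto
      have a2: "(f has_derivative D (x + t *\<^sub>R u)) (at (x + t *\<^sub>R u))"
        using Df inS[of t 0] that h0 by auto
      show ?thesis unfolding g_def
        by (intro has_derivative_diff has_derivative_compose[OF l1 a1] has_derivative_compose[OF l2 a2])
    qed
    obtain \<xi> where xi: "\<xi> \<in> {0<..<h}" and mv: "g h - g 0 =
        D (x + \<xi> *\<^sub>R u + h *\<^sub>R v) ((h - 0) *\<^sub>R u) - D (x + \<xi> *\<^sub>R u) ((h - 0) *\<^sub>R u)"
      using mvt_simple[of 0 h g, OF h0 gder] by auto
    define y1 where "y1 = x + \<xi> *\<^sub>R u + h *\<^sub>R v"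
    define y2 where "y2 = x + \<xi> *\<^sub>R u"
    have lin1: "linear (D y1)" using Df[of y1] inS[of \<xi> h] xi h0
      unfolding y1_def by (auto dest: has_derivative_linear)
    have lin2: "linear (D y2)" using Df[of y2] inS[of \<xi> 0] xi h0
      unfolding y2_def by (auto dest: has_derivative_linear)
    have gdiff: "g h - g 0 = h * (D y1 u - D y2 u)"
      using mv linear_scale[OF lin1] linear_scale[OF lin2]
      by (simp add: y1_def y2_def right_diff_distrib)
    have gdel: "g h - g 0 = f (x + h *\<^sub>R u + h *\<^sub>R v) - f (x + h *\<^sub>R u) - f (x + h *\<^sub>R v) + f x"
      by (simp add: g_def)
    have n1: "norm (y1 - x) \<le> h * (norm u + norm v)"
    proof -
      have "norm (y1 - x) \<le> \<xi> * norm u + h * norm v"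
        using xi h0 unfolding y1_def
        by (metis (no_types, lifting) abs_of_nonneg add_diff_cancel_left' add.assoc greaterThanLessThan_iff
            less_eq_real_def norm_scaleR norm_triangle_ineq)
      also have "\<dots> \<le> h * norm u + h * norm v" using xi by (intro add_mono mult_right_mono) auto
      finally show ?thesis by (simp add: distrib_left)
    qed
    have n2: "norm (y2 - x) \<le> h * norm u"
      using xi unfolding y2_def by (auto intro!: mult_right_mono)
    have b1: "\<bar>D y1 u - D x u - Eu (y1 - x)\<bar> \<le> e * (h * (norm u + norm v))"
      using d0P[of y1] n1 hk e by (smt (verit) mult_left_mono real_norm_def min_less_iff_conj)
    have b2: "\<bar>D y2 u - D x u - Eu (y2 - x)\<bar> \<le> e * (h * norm u)"
      using d0P[of y2] n2 hk e
      by (smt (verit) mult_left_mono real_norm_def min_less_iff_conj norm_ge_zero mult_nonneg_nonneg h0)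
    have Elin: "Eu (y1 - x) - Eu (y2 - x) = h * Eu v"
    proof -
      have eq: "y1 - x = (y2 - x) + h *\<^sub>R v" by (simp add: y1_def y2_def)
      have "Eu (y1 - x) = Eu (y2 - x) + h * Eu v"
        by (simp only: eq linear_add[OF bounded_linear.linear[OF blE]]
          linear_scale[OF bounded_linear.linear[OF blE]] real_scaleR_def)
      thus ?thesis by simp
    qed
    have "\<bar>(D y1 u - D y2 u) - h * Eu v\<bar> \<le> e * h * (2 * norm u + norm v)"
      using b1 b2 Elin by (simp add: algebra_simps)
    hence "\<bar>h * (D y1 u - D y2 u) - h * (h * Eu v)\<bar> \<le> h * (e * h * (2 * norm u + norm v))"
      using h0 by (metis abs_mult abs_of_pos mult_left_mono right_diff_distrib less_eq_real_def)
    thus "\<bar>(f (x + h *\<^sub>R u + h *\<^sub>R v) - f (x + h *\<^sub>R u) - f (x + h *\<^sub>R v) + f x) - h\<^sup>2 * Eu v\<bar>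
        \<le> e * h\<^sup>2 * (2 * norm u + norm v)"
      using gdiff gdel by (simp add: power2_eq_square algebra_simps)
  qed
qed

lemma schwarz:
  fixes f :: "'a::real_normed_vector \<Rightarrow> real"
  assumes S: "open S" "x \<in> S"
  and Df: "\<And>y. y \<in> S \<Longrightarrow> (f has_derivative D y) (at y)"
  and Eu: "((\<lambda>y. D y u) has_derivative Eu) (at x)"
  and Ev: "((\<lambda>y. D y v) has_derivative Ev) (at x)"
  shows "Eu v = Ev u"
proof (rule ccontr)
  assume ne: "Eu v \<noteq> Ev u"
  define e where "e = \<bar>Eu v - Ev u\<bar> / (6 * (norm u + norm v) + 1)"
  have np: "0 < 6 * (norm u + norm v) + 1" by (intro add_nonneg_pos mult_nonneg_nonneg add_nonneg_nonneg) auto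
  have e: "e > 0" using ne np by (simp add: e_def)
  obtain d1 where d1: "d1 > 0" and P1: "\<And>h. 0 < h \<and> h < d1 \<Longrightarrow>
     \<bar>(f (x + h *\<^sub>R u + h *\<^sub>R v) - f (x + h *\<^sub>R u) - f (x + h *\<^sub>R v) + f x) - h\<^sup>2 * Eu v\<bar>
        \<le> e * h\<^sup>2 * (2 * norm u + norm v)"
    using schwarz_half[OF S Df Eu e, of v] by blast
  obtain d2 where d2: "d2 > 0" and P2: "\<And>h. 0 < h \<and> h < d2 \<Longrightarrow>
     \<bar>(f (x + h *\<^sub>R v + h *\<^sub>R u) - f (x + h *\<^sub>R v) - f (x + h *\<^sub>R u) + f x) - h\<^sup>2 * Ev u\<bar>
        \<le> e * h\<^sup>2 * (2 * norm v + norm u)"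
    using schwarz_half[OF S Df Ev e, of u] by blast
  define h where "h = min d1 d2 / 2"
  have h0: "0 < h" "h < d1" "h < d2" using d1 d2 by (auto simp: h_def)
  have sw: "x + h *\<^sub>R v + h *\<^sub>R u = x + h *\<^sub>R u + h *\<^sub>R v" by (simp add: algebra_simps)
  have "\<bar>h\<^sup>2 * Eu v - h\<^sup>2 * Ev u\<bar> \<le> e * h\<^sup>2 * (2 * norm u + norm v) + e * h\<^sup>2 * (2 * norm v + norm u)"
    using P1[of h] P2[of h] h0 unfolding sw by linarith
  also have "\<dots> = h\<^sup>2 * (e * (3 * (norm u + norm v)))" by (simp add: algebra_simps)
  finally have "h\<^sup>2 * \<bar>Eu v - Ev u\<bar> \<le> h\<^sup>2 * (e * (3 * (norm u + norm v)))"
    by (simp add: abs_mult right_diff_distrib[symmetric])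
  hence le: "\<bar>Eu v - Ev u\<bar> \<le> e * (3 * (norm u + norm v))" using h0 by simp
  have "e * (6 * (norm u + norm v) + 1) = \<bar>Eu v - Ev u\<bar>" using np by (simp add: e_def)
  moreover have "e * (6 * (norm u + norm v) + 1) = 6 * (e * (norm u + norm v)) + e"
    "e * (3 * (norm u + norm v)) = 3 * (e * (norm u + norm v))" by (simp_all add: algebra_simps)
  moreover have "0 \<le> e * (norm u + norm v)" using e by simp
  ultimately show False using le e by linarith
qed

lemma partial_deriv_eq:
  assumes "(f has_derivative Df) (at x)"
  shows "partial_deriv j f x = Df (axis j 1)"
proof -
  have l: "((\<lambda>t::real. x + t *\<^sub>R axis j 1) has_derivative (\<lambda>t. t *\<^sub>R axis j 1)) (at 0)"
    by (auto intro!: derivative_eq_intros)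
  have "((\<lambda>t. f (x + t *\<^sub>R axis j 1)) has_derivative (\<lambda>t. Df (t *\<^sub>R axis j 1))) (at 0)"
    using has_derivative_compose[OF l] assms by simp
  moreover have "(\<lambda>t. Df (t *\<^sub>R axis j 1)) = (\<lambda>t. t *\<^sub>R Df (axis j 1))"
    using assms has_derivative_linear linear_scale by blast
  ultimately have "((\<lambda>t. f (x + t *\<^sub>R axis j 1)) has_vector_derivative Df (axis j 1)) (at 0)"
    by (simp add: has_vector_derivative_def)
  thus ?thesis unfolding partial_deriv_def by (rule vector_derivative_at)
qed

lemma rot2:
  fixes Q :: "real^2^2"
  assumes "rotation_matrix Q"
  shows "Q$1$2 = - Q$2$1 \<and> Q$2$2 = Q$1$1 \<and> (Q$1$1)\<^sup>2 + (Q$2$1)\<^sup>2 = 1"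
proof -
  have o: "transpose Q ** Q = mat 1" and d: "det Q = 1"
    using assms by (auto simp: rotation_matrix_def orthogonal_matrix)
  have e1: "(Q$1$1)\<^sup>2 + (Q$2$1)\<^sup>2 = 1"
    using arg_cong[OF o, of "\<lambda>M. M$1$1"]
    by (simp add: matrix_matrix_mult_def transpose_def mat_def sum_2 power2_eq_square)
  have e2: "(Q$1$2)\<^sup>2 + (Q$2$2)\<^sup>2 = 1"
    using arg_cong[OF o, of "\<lambda>M. M$2$2"]
    by (simp add: matrix_matrix_mult_def transpose_def mat_def sum_2 power2_eq_square)
  have dd: "Q$1$1 * Q$2$2 - Q$1$2 * Q$2$1 = 1" using d by (simp add: det_2)
  have "(Q$2$2 - Q$1$1)\<^sup>2 + (Q$1$2 + Q$2$1)\<^sup>2 = 0"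
    using e1 e2 dd by (simp add: power2_eq_square algebra_simps)
  hence "Q$2$2 - Q$1$1 = 0 \<and> Q$1$2 + Q$2$1 = 0"
    by (simp add: sum_power2_eq_zero_iff)
  thus ?thesis using e1 by simp
qed

lemma alg1:
  fixes a b A1 A2 B1 B2 p q :: real
  assumes "a\<^sup>2 + b\<^sup>2 = 1" "a * A1 + b * B1 = 0" "a * A2 + b * B2 = 0"
    "- B1 - A2 = p" "A1 - B2 = q"
  shows "A1 = b * (a * p + b * q) \<and> B1 = - a * (a * p + b * q) \<and>
         A2 = - b * (b * p - a * q) \<and> B2 = a * (b * p - a * q)"
proof -
  define w1 where "w1 = a * B1 - b * A1"
  define w2 where "w2 = a * B2 - b * A2"
  have iB1: "B1 * (a\<^sup>2 + b\<^sup>2) = a * w1 + b * (a * A1 + b * B1)"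
    unfolding w1_def by (simp add: power2_eq_square algebra_simps)
  have iA1: "A1 * (a\<^sup>2 + b\<^sup>2) = - b * w1 + a * (a * A1 + b * B1)"
    unfolding w1_def by (simp add: power2_eq_square algebra_simps)
  have iB2: "B2 * (a\<^sup>2 + b\<^sup>2) = a * w2 + b * (a * A2 + b * B2)"
    unfolding w2_def by (simp add: power2_eq_square algebra_simps)
  have iA2: "A2 * (a\<^sup>2 + b\<^sup>2) = - b * w2 + a * (a * A2 + b * B2)"
    unfolding w2_def by (simp add: power2_eq_square algebra_simps)
  have hB1: "B1 = a * w1" using iB1 assms(1,2) by simp
  have hA1: "A1 = - b * w1" using iA1 assms(1,2) by simp
  have hB2: "B2 = a * w2" using iB2 assms(1,3) by simp
  have hA2: "A2 = - b * w2" using iA2 assms(1,3) by simp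
  have p: "p = - a * w1 + b * w2" using assms(4) hB1 hA2 by simp
  have q: "q = - b * w1 - a * w2" using assms(5) hA1 hB2 by simp
  have i1: "w1 * (a\<^sup>2 + b\<^sup>2) = - (a * (- a * w1 + b * w2) + b * (- b * w1 - a * w2))"
    by (simp add: power2_eq_square algebra_simps)
  have i2: "w2 * (a\<^sup>2 + b\<^sup>2) = b * (- a * w1 + b * w2) - a * (- b * w1 - a * w2)"
    by (simp add: power2_eq_square algebra_simps)
  have W1: "w1 = - (a * p + b * q)" using i1 assms(1) p q by simp
  have W2: "w2 = b * p - a * q" using i2 assms(1) p q by simp
  show ?thesis using hA1 hA2 hB1 hB2 W1 W2 by (simp add: algebra_simps)
qed

lemma alg2:
  fixes a b A1 A2 B1 B2 p q :: real
  assumes "a\<^sup>2 + b\<^sup>2 = 1"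
   "A1 = b * (a * p + b * q)" "B1 = - a * (a * p + b * q)"
   "A2 = - b * (b * p - a * q)" "B2 = a * (b * p - a * q)"
   "- A2 * (a * p + b * q) - a * (A2 * p + B2 * q) = A1 * (b * p - a * q) + a * (B1 * p - A1 * q)"
   "B2 * (a * p + b * q) + b * (A2 * p + B2 * q) = - B1 * (b * p - a * q) - b * (B1 * p - A1 * q)"
  shows "p = 0 \<and> q = 0"
proof -
  have h1: "a * (a\<^sup>2 + b\<^sup>2) * (p\<^sup>2 + q\<^sup>2) =
     (- A2 * (a * p + b * q) - a * (A2 * p + B2 * q)) - (A1 * (b * p - a * q) + a * (B1 * p - A1 * q))"
    unfolding assms(2-5) by (simp add: power2_eq_square algebra_simps)
  have h2: "- b * (a\<^sup>2 + b\<^sup>2) * (p\<^sup>2 + q\<^sup>2) =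
     (B2 * (a * p + b * q) + b * (A2 * p + B2 * q)) - (- B1 * (b * p - a * q) - b * (B1 * p - A1 * q))"
    unfolding assms(2-5) by (simp add: power2_eq_square algebra_simps)
  from h1 h2 assms(1,6,7) have "a * (p\<^sup>2 + q\<^sup>2) = 0" "b * (p\<^sup>2 + q\<^sup>2) = 0" by auto
  hence "(a\<^sup>2 + b\<^sup>2) * (p\<^sup>2 + q\<^sup>2) = 0"
    by (metis (no_types, opaque_lifting) add_cancel_right_left mult.assoc mult_zero_right power2_eq_square ring_class.ring_distribs(2))
  thus ?thesis using assms(1) by (simp add: sum_power2_eq_zero_iff)
qed

theorem theorem3p1:
  fixes \<Omega> :: "(real^2) set" and R :: "real^2 \<Rightarrow> real^2^2" and \<alpha> :: "real^2"
  assumes "open \<Omega>" and "connected \<Omega>"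
    and "C2_on \<Omega> R"
    and "\<forall>x\<in>\<Omega>. rotation_matrix (R x)"
    and "\<forall>x\<in>\<Omega>. curl_mat R x = \<alpha>"
  shows "\<exists>C. \<forall>x\<in>\<Omega>. R x = C"
proof (cases "\<Omega> = {}")
  case True thus ?thesis by simp
next
  case False
  then obtain x0 where x0: "x0 \<in> \<Omega>" by blast
  obtain f' :: "real^2 \<Rightarrow> ((real^2) \<Rightarrow>\<^sub>L (real^2^2))"
    and f'' :: "real^2 \<Rightarrow> ((real^2) \<Rightarrow>\<^sub>L ((real^2) \<Rightarrow>\<^sub>L (real^2^2)))"
    where D1: "\<forall>x\<in>\<Omega>. (R has_derivative blinfun_apply (f' x)) (at x)"
      and D2: "\<forall>x\<in>\<Omega>. (f' has_derivative blinfun_apply (f'' x)) (at x)"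
    using assms(3) unfolding C2_on_def by blast
  define a where "a y = R y $ 1 $ 1" for y
  define b where "b y = R y $ 2 $ 1" for y
  define A where "A y h = blinfun_apply (f' y) h $ 1 $ 1" for y h
  define B where "B y h = blinfun_apply (f' y) h $ 2 $ 1" for y h
  define p where "p = \<alpha> $ 1"
  define q where "q = \<alpha> $ 2"
  define e1 :: "real^2" where "e1 = axis 1 1"
  define e2 :: "real^2" where "e2 = axis 2 1"
  have comp: "((\<lambda>y. R y $ i $ k) has_derivative (\<lambda>h. blinfun_apply (f' x) h $ i $ k)) (at x)"
    if "x \<in> \<Omega>" for x i k
  proof -
    have "((\<lambda>y. R y $ i) has_derivative (\<lambda>h. blinfun_apply (f' x) h $ i)) (at x)"
      using bounded_linear.has_derivative[OF bounded_linear_vec_nth D1[rule_format, OF that]] .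
    from bounded_linear.has_derivative[OF bounded_linear_vec_nth this] show ?thesis .
  qed
  have da: "(a has_derivative A x) (at x)" if "x \<in> \<Omega>" for x
    using comp[OF that, of 1 1] unfolding a_def[abs_def] A_def[abs_def] by simp
  have db: "(b has_derivative B x) (at x)" if "x \<in> \<Omega>" for x
    using comp[OF that, of 2 1] unfolding b_def[abs_def] B_def[abs_def] by simp
  have rot: "R x $ 1 $ 2 = - b x \<and> R x $ 2 $ 2 = a x \<and> (a x)\<^sup>2 + (b x)\<^sup>2 = 1" if "x \<in> \<Omega>" for x
    using rot2[of "R x"] assms(4) that unfolding a_def b_def by auto
  have pointwise: "A x e1 = b x * (a x * p + b x * q) \<and> B x e1 = - a x * (a x * p + b x * q) \<and>
         A x e2 = - b x * (b x * p - a x * q) \<and> B x e2 = a x * (b x * p - a x * q)"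
    if x: "x \<in> \<Omega>" for x
  proof -
    have r12: "((\<lambda>y. R y $ 1 $ 2) has_derivative (\<lambda>h. - B x h)) (at x)"
      by (rule has_derivative_transform_within_open[OF has_derivative_minus[OF db[OF x]] assms(1) x])
        (use rot in auto)
    have r22: "((\<lambda>y. R y $ 2 $ 2) has_derivative A x) (at x)"
      by (rule has_derivative_transform_within_open[OF da[OF x] assms(1) x])
        (use rot in auto)
    have r11: "((\<lambda>y. R y $ 1 $ 1) has_derivative A x) (at x)"
      using da[OF x] unfolding a_def[abs_def] .
    have r21: "((\<lambda>y. R y $ 2 $ 1) has_derivative B x) (at x)"
      using db[OF x] unfolding b_def[abs_def] .
    have cx: "curl_mat R x = \<alpha>" using assms(5) x by blast
    have c1: "- B x e1 - A x e2 = p"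
      using arg_cong[OF cx, of "\<lambda>v. v $ 1"]
      unfolding curl_mat_def p_def e1_def e2_def
      by (simp add: partial_deriv_eq[OF r12] partial_deriv_eq[OF r11])
    have c2: "A x e1 - B x e2 = q"
      using arg_cong[OF cx, of "\<lambda>v. v $ 2"]
      unfolding curl_mat_def q_def e1_def e2_def
      by (simp add: partial_deriv_eq[OF r22] partial_deriv_eq[OF r21])
    have sq: "((\<lambda>y. a y * a y + b y * b y) has_derivative
        (\<lambda>h. a x * A x h + A x h * a x + (b x * B x h + B x h * b x))) (at x)"
      by (intro has_derivative_add has_derivative_mult da db x)
    have sq1: "((\<lambda>y. a y * a y + b y * b y) has_derivative (\<lambda>h. 0)) (at x)"
      by (rule has_derivative_transform_within_open[OF has_derivative_const assms(1) x])
        (use rot in \<open>auto simp: power2_eq_square\<close>)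
    have "(\<lambda>h. a x * A x h + A x h * a x + (b x * B x h + B x h * b x)) = (\<lambda>h. 0)"
      using has_derivative_unique[OF sq sq1] .
    hence FE: "a x * A x h + A x h * a x + (b x * B x h + B x h * b x) = 0" for h
      by (rule fun_cong)
    have T: "2 * (a x * A x h + b x * B x h) = a x * A x h + A x h * a x + (b x * B x h + B x h * b x)" for h
      by (simp add: algebra_simps)
    have n1: "a x * A x e1 + b x * B x e1 = 0" using T[of e1] FE[of e1] by simp
    have n2: "a x * A x e2 + b x * B x e2 = 0" using T[of e2] FE[of e2] by simp
    show ?thesis using alg1[OF _ n1 n2 c1 c2] rot[OF x] by blast
  qed
  have blin: "bounded_linear (\<lambda>L :: (real^2) \<Rightarrow>\<^sub>L (real^2^2). blinfun_apply L u $ i $ k)" for u i k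
    by (intro bounded_linear_compose[OF bounded_linear_vec_nth] blinfun.bounded_linear_left)
  have D2x: "(f' has_derivative blinfun_apply (f'' x0)) (at x0)" using D2 x0 by blast
  have sd: "((\<lambda>y. blinfun_apply (f' y) u $ i $ k) has_derivative (\<lambda>w. blinfun_apply (blinfun_apply (f'' x0) w) u $ i $ k)) (at x0)"
    for u i k
    using bounded_linear.has_derivative[OF blin D2x] .
  have sA: "((\<lambda>y. A y u) has_derivative (\<lambda>w. blinfun_apply (blinfun_apply (f'' x0) w) u $ 1 $ 1)) (at x0)" for u
    using sd[of u 1 1] unfolding A_def .
  have sB: "((\<lambda>y. B y u) has_derivative (\<lambda>w. blinfun_apply (blinfun_apply (f'' x0) w) u $ 2 $ 1)) (at x0)" for u
    using sd[of u 2 1] unfolding B_def .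
  have symA: "blinfun_apply (blinfun_apply (f'' x0) e2) e1 $ 1 $ 1 = blinfun_apply (blinfun_apply (f'' x0) e1) e2 $ 1 $ 1"
    by (rule schwarz[OF assms(1) x0 da sA sA])
  have symB: "blinfun_apply (blinfun_apply (f'' x0) e2) e1 $ 2 $ 1 = blinfun_apply (blinfun_apply (f'' x0) e1) e2 $ 2 $ 1"
    by (rule schwarz[OF assms(1) x0 db sB sB])
  note da0 = da[OF x0] and db0 = db[OF x0]
  have gA1: "((\<lambda>y. b y * (a y * p + b y * q)) has_derivative
      (\<lambda>h. b x0 * (A x0 h * p + B x0 h * q) + B x0 h * (a x0 * p + b x0 * q))) (at x0)"
    by (intro has_derivative_mult has_derivative_add has_derivative_mult_left da0 db0)
  have gB1: "((\<lambda>y. - a y * (a y * p + b y * q)) has_derivative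
      (\<lambda>h. - a x0 * (A x0 h * p + B x0 h * q) + - A x0 h * (a x0 * p + b x0 * q))) (at x0)"
    by (intro has_derivative_mult has_derivative_add has_derivative_mult_left has_derivative_minus da0 db0)
  have gA2: "((\<lambda>y. - b y * (b y * p - a y * q)) has_derivative
      (\<lambda>h. - b x0 * (B x0 h * p - A x0 h * q) + - B x0 h * (b x0 * p - a x0 * q))) (at x0)"
    by (intro has_derivative_mult has_derivative_diff has_derivative_mult_left has_derivative_minus da0 db0)
  have gB2: "((\<lambda>y. a y * (b y * p - a y * q)) has_derivative
      (\<lambda>h. a x0 * (B x0 h * p - A x0 h * q) + A x0 h * (b x0 * p - a x0 * q))) (at x0)"
    by (intro has_derivative_mult has_derivative_diff has_derivative_mult_left da0 db0)
  have tA1: "((\<lambda>y. A y e1) has_derivative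
      (\<lambda>h. b x0 * (A x0 h * p + B x0 h * q) + B x0 h * (a x0 * p + b x0 * q))) (at x0)"
    by (rule has_derivative_transform_within_open[OF gA1 assms(1) x0]) (use pointwise in auto)
  have tB1: "((\<lambda>y. B y e1) has_derivative
      (\<lambda>h. - a x0 * (A x0 h * p + B x0 h * q) + - A x0 h * (a x0 * p + b x0 * q))) (at x0)"
    by (rule has_derivative_transform_within_open[OF gB1 assms(1) x0]) (use pointwise in auto)
  have tA2: "((\<lambda>y. A y e2) has_derivative
      (\<lambda>h. - b x0 * (B x0 h * p - A x0 h * q) + - B x0 h * (b x0 * p - a x0 * q))) (at x0)"
    by (rule has_derivative_transform_within_open[OF gA2 assms(1) x0]) (use pointwise in auto)
  have tB2: "((\<lambda>y. B y e2) has_derivative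
      (\<lambda>h. a x0 * (B x0 h * p - A x0 h * q) + A x0 h * (b x0 * p - a x0 * q))) (at x0)"
    by (rule has_derivative_transform_within_open[OF gB2 assms(1) x0]) (use pointwise in auto)
  note uA1 = fun_cong[OF has_derivative_unique[OF sA tA1], of e2]
  note uA2 = fun_cong[OF has_derivative_unique[OF sA tA2], of e1]
  note uB1 = fun_cong[OF has_derivative_unique[OF sB tB1], of e2]
  note uB2 = fun_cong[OF has_derivative_unique[OF sB tB2], of e1]
  note P0 = pointwise[OF x0]
  have E6: "- A x0 e2 * (a x0 * p + b x0 * q) - a x0 * (A x0 e2 * p + B x0 e2 * q) =
     A x0 e1 * (b x0 * p - a x0 * q) + a x0 * (B x0 e1 * p - A x0 e1 * q)"
    using symB uB1 uB2 by (simp add: algebra_simps)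
  have E7: "B x0 e2 * (a x0 * p + b x0 * q) + b x0 * (A x0 e2 * p + B x0 e2 * q) =
     - B x0 e1 * (b x0 * p - a x0 * q) - b x0 * (B x0 e1 * p - A x0 e1 * q)"
    using symA uA1 uA2 by (simp add: algebra_simps)
  have pq: "p = 0 \<and> q = 0"
    using alg2[OF conjunct2[OF conjunct2[OF rot[OF x0]]] _ _ _ _ E6 E7] P0 by blast
  have hdec: "h = h $ 1 *\<^sub>R e1 + h $ 2 *\<^sub>R e2" for h :: "real^2"
    unfolding e1_def e2_def by (simp add: vec_eq_iff forall_2 axis_def)
  have zeroA: "A x = (\<lambda>h. 0)" and zeroB: "B x = (\<lambda>h. 0)" if x: "x \<in> \<Omega>" for x
  proof -
    have lA: "linear (A x)" using da[OF x] has_derivative_linear by blast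
    have lB: "linear (B x)" using db[OF x] has_derivative_linear by blast
    have z: "A x e1 = 0" "A x e2 = 0" "B x e1 = 0" "B x e2 = 0" using pointwise[OF x] pq by auto
    show "A x = (\<lambda>h. 0)"
    proof
      fix h :: "real^2"
      have "A x h = A x (h $ 1 *\<^sub>R e1 + h $ 2 *\<^sub>R e2)" using hdec[of h] by simp
      also have "\<dots> = 0" using z by (simp add: linear_add[OF lA] linear_scale[OF lA])
      finally show "A x h = 0" .
    qed
    show "B x = (\<lambda>h. 0)"
    proof
      fix h :: "real^2"
      have "B x h = B x (h $ 1 *\<^sub>R e1 + h $ 2 *\<^sub>R e2)" using hdec[of h] by simp
      also have "\<dots> = 0" using z by (simp add: linear_add[OF lB] linear_scale[OF lB])
      finally show "B x h = 0" .
    qed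
  qed
  have ca: "a x = a x0" if "x \<in> \<Omega>" for x
    by (rule has_derivative_zero_unique_connected[OF assms(1,2) _ that x0])
      (use da zeroA in metis)
  have cb: "b x = b x0" if "x \<in> \<Omega>" for x
    by (rule has_derivative_zero_unique_connected[OF assms(1,2) _ that x0])
      (use db zeroB in metis)
  show ?thesis
  proof (intro exI ballI)
    fix x assume x: "x \<in> \<Omega>"
    show "R x = R x0"
      using rot[OF x] rot[OF x0] ca[OF x] cb[OF x]
      unfolding a_def b_def by (simp add: vec_eq_iff forall_2)
  qed
qed

end
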